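(* Let $M\in\mathbb{N}$, $M\ge2$, and let $r$ be a strong solution of the BVP. Then there exists $\delta>0$ such that $z$ is monotone on $(0,\delta)$. If, in addition, $r>0$ on $(0,\delta)$, then one of the following holds identically on $(0,\delta)$: (a) $\dot z\ge0$, equivalently $0<M^2-M\sqrt{M^2-1}\le\frac{R\dot r}{r}\le M^2+M\sqrt{M^2-1}$; (b) $\dot z\le0$ and $\left(\frac{r}{R}\right)^{\cdot}>0$; (c) $\dot z\le0$ and $\left(\frac{r}{R}\right)^{\cdot}<0$.
   Context: Fix constants $\gamma>0$, $s_0\ge0$, $\kappa\ge-\gamma s_0$ and a convex function $\rho\in C^\infty(\mathbb{R})$ with $\rho(s)=0$ for $s\le0$, $\rho(s)=\gamma s+\kappa$ for $s\ge s_0$, and $\rho=\rho_1$ on $[0,s_0]$ where $\rho_1$ is smooth and convex with $\rho_1(0)=0$, $\rho_1(s_0)=\gamma s_0+\kappa$. For $M\in\mathbb{N}\setminus\{0\}$ and a function $r$ on $(0,1]$ let $d(R)=\frac{Mr(R)\dot r(R)}{R}$ and $Lr(R)=\frac{M^2r}{R}-\dot r-R\ddot r$. A strong solution of the BVP is a function $r\in C([0,1])\cap C^\infty((0,1])$ with $Lr=M\rho''(d)\dot d\,r$ on $(0,1)$, $r(0)=0$ and $r(1)=1$. Let $f(s)=s\rho'(s)-\rho(s)$ and $z(R)=\frac{\dot r(R)^2}{2}+\frac{M^2r(R)^2}{2R^2}+f(d(R))$ for $R\in(0,1]$. *)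

theory Defs
  imports "HOL-Analysis.Analysis"
begin

text \<open>C-infinity on an arbitrary real set S: there is a sequence of functions F n
  with F 0 = f on S and F (n+1) the derivative of F n relative to S (one-sided at
  boundary points of S, e.g. at R = 1 for S = (0,1]).\<close>
definition smooth_on :: "real set \<Rightarrow> (real \<Rightarrow> real) \<Rightarrow> bool" where
  "smooth_on S f \<longleftrightarrow> (\<exists>F :: nat \<Rightarrow> real \<Rightarrow> real.
     (\<forall>x\<in>S. F 0 x = f x) \<and>
     (\<forall>n. \<forall>x\<in>S. (F n has_real_derivative F (Suc n) x) (at x within S)))"

definition rho_admissible :: "real \<Rightarrow> real \<Rightarrow> real \<Rightarrow> (real \<Rightarrow> real) \<Rightarrow> bool" where
  "rho_admissible \<gamma> s0 \<kappa> \<rho> \<longleftrightarrow>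
     \<gamma> > 0 \<and> s0 \<ge> 0 \<and> \<kappa> \<ge> - \<gamma> * s0 \<and>
     smooth_on UNIV \<rho> \<and> convex_on UNIV \<rho> \<and>
     (\<forall>s\<le>0. \<rho> s = 0) \<and> (\<forall>s\<ge>s0. \<rho> s = \<gamma> * s + \<kappa>) \<and>
     (\<exists>\<rho>1. smooth_on {0..s0} \<rho>1 \<and> convex_on {0..s0} \<rho>1 \<and>
        \<rho>1 0 = 0 \<and> \<rho>1 s0 = \<gamma> * s0 + \<kappa> \<and> (\<forall>s\<in>{0..s0}. \<rho> s = \<rho>1 s))"

definition dfun :: "nat \<Rightarrow> (real \<Rightarrow> real) \<Rightarrow> real \<Rightarrow> real" where
  "dfun M r R = real M * r R * deriv r R / R"

definition Lop :: "nat \<Rightarrow> (real \<Rightarrow> real) \<Rightarrow> real \<Rightarrow> real" where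
  "Lop M r R = (real M)\<^sup>2 * r R / R - deriv r R - R * deriv (deriv r) R"

definition strong_solution :: "nat \<Rightarrow> (real \<Rightarrow> real) \<Rightarrow> (real \<Rightarrow> real) \<Rightarrow> bool" where
  "strong_solution M \<rho> r \<longleftrightarrow>
     continuous_on {0..1} r \<and> smooth_on {0<..1} r \<and>
     (\<forall>R\<in>{0<..<1}. Lop M r R
        = real M * deriv (deriv \<rho>) (dfun M r R) * deriv (dfun M r) R * r R) \<and>
     r 0 = 0 \<and> r 1 = 1"

definition ffun :: "(real \<Rightarrow> real) \<Rightarrow> real \<Rightarrow> real" where
  "ffun \<rho> s = s * deriv \<rho> s - \<rho> s"

definition zfun :: "nat \<Rightarrow> (real \<Rightarrow> real) \<Rightarrow> (real \<Rightarrow> real) \<Rightarrow> real \<Rightarrow> real" where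
  "zfun M \<rho> r R = (deriv r R)\<^sup>2 / 2 + (real M)\<^sup>2 * (r R)\<^sup>2 / (2 * R\<^sup>2)
                   + ffun \<rho> (dfun M r R)"

end

theory Submission
  imports Defs
begin



lemma crossing:
  fixes f f' :: "real \<Rightarrow> real"
  assumes ab: "a \<le> b"
    and der: "\<And>x. x\<in>{a..b} \<Longrightarrow> (f has_real_derivative f' x) (at x)"
    and neg: "\<And>x. x\<in>{a..b} \<Longrightarrow> f x = 0 \<Longrightarrow> f' x < 0"
    and fa: "f a \<le> 0"
  shows "f b \<le> 0"
proof (rule ccontr)
  assume "\<not> f b \<le> 0"
  hence fb: "f b > 0" by simp
  have cont: "continuous_on {a..b} f"
    by (rule continuous_at_imp_continuous_on) (use der DERIV_isCont in blast)
  define Z where "Z = {x\<in>{a..b}. f x = 0}"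
  have "closed Z" unfolding Z_def by (rule continuous_closed_preimage_constant[OF cont]) simp
  moreover have "Z = {a..b} \<inter> Z" unfolding Z_def by auto
  ultimately have "compact Z" by (metis compact_Int_closed compact_Icc)
  obtain x0 where "a \<le> x0" "x0 \<le> b" "f x0 = 0"
    using IVT'[of f a 0 b, OF fa _ ab cont] fb by auto
  hence "Z \<noteq> {}" unfolding Z_def by auto
  with \<open>compact Z\<close> obtain c where cZ: "c \<in> Z" and cmax: "\<forall>t\<in>Z. t \<le> c"
    using compact_attains_sup by blast
  have c: "a \<le> c" "c \<le> b" "f c = 0" using cZ unfolding Z_def by auto
  have cb: "c < b" using c fb by (cases "c = b") auto
  have "f' c < 0" using neg c by auto
  moreover have "(f has_real_derivative f' c) (at c)" using der c by auto
  ultimately obtain d where d: "d > 0" "\<forall>h>0. h < d \<longrightarrow> f c > f (c + h)"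
    using DERIV_neg_dec_right by blast
  define h where "h = min (d/2) (b - c)"
  have h: "h > 0" "h < d" "c + h \<le> b" using d cb unfolding h_def by auto
  have "f c > f (c+h)" using d(2) h(1,2) by blast
  hence fch: "f (c+h) \<le> 0" using c(3) by simp
  have "continuous_on {c+h..b} f" by (rule continuous_on_subset[OF cont]) (use c h in auto)
  then obtain x where x: "c + h \<le> x" "x \<le> b" "f x = 0"
    using IVT'[of f "c+h" 0 b] fch fb h by auto
  hence "x \<in> Z" using c h unfolding Z_def by auto
  hence "x \<le> c" using cmax by blast
  thus False using x h by linarith
qed

lemma gronwall0:
  fixes E E' :: "real \<Rightarrow> real"
  assumes ab: "a \<le> b"
    and der: "\<And>x. x\<in>{a..b} \<Longrightarrow> (E has_real_derivative E' x) (at x)"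
    and le: "\<And>x. x\<in>{a..b} \<Longrightarrow> E' x \<le> C * E x"
    and Ea: "E a = 0"
    and nn: "E b \<ge> 0"
  shows "E b = 0"
proof -
  define g where "g x = exp (- C * x) * E x" for x
  have "g b \<le> g a"
  proof (rule deriv_nonpos_imp_antimono[OF _ _ ab])
    fix x assume x: "x \<in> {a..b}"
    show "(g has_real_derivative (exp (- C * x) * (E' x - C * E x))) (at x)"
    proof -
      have e: "((\<lambda>x. exp (- C * x)) has_real_derivative (exp (- C * x) * (- C))) (at x)"
        by (auto intro!: derivative_eq_intros)
      show ?thesis unfolding g_def
        by (rule DERIV_cong[OF DERIV_mult'[OF e der[OF x]]]) (simp add: algebra_simps)
    qed
    show "exp (- C * x) * (E' x - C * E x) \<le> 0"
      using le[OF x] by (simp add: mult_nonneg_nonpos)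
  qed
  hence "exp (- C * b) * E b \<le> 0" using Ea unfolding g_def by simp
  hence "E b \<le> 0" by (simp add: mult_le_0_iff)
  thus ?thesis using nn by simp
qed

lemma convex_f2_nonneg:
  fixes f f1 f2 :: "real \<Rightarrow> real"
  assumes cv: "convex_on UNIV f"
    and d1: "\<And>x. (f has_real_derivative f1 x) (at x)"
    and d2: "\<And>x. (f1 has_real_derivative f2 x) (at x)"
  shows "f2 x \<ge> 0"
proof (rule ccontr)
  assume "\<not> f2 x \<ge> 0"
  hence "f2 x < 0" by simp
  then obtain d where d: "d > 0" "\<forall>h>0. h < d \<longrightarrow> f1 x > f1 (x + h)"
    using DERIV_neg_dec_right[OF d2] by blast
  define y where "y = x + d/2"
  have xy: "x < y" using d unfolding y_def by simp
  have "f1 x > f1 y" using d unfolding y_def by auto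
  moreover have t1: "f y - f x \<ge> f1 x * (y - x)"
    by (rule convex_on_imp_above_tangent[OF cv]) (auto simp: d1)
  moreover have t2: "f x - f y \<ge> f1 y * (x - y)"
    by (rule convex_on_imp_above_tangent[OF cv]) (auto simp: d1)
  ultimately have "f1 y * (y - x) \<ge> f1 x * (y - x)" by (simp add: algebra_simps)
  hence "f1 y \<ge> f1 x" using xy by simp
  thus False using \<open>f1 x > f1 y\<close> by simp
qed




lemma alg_neg:
  fixes a b c R p m :: real
  assumes R: "R > 0" and a: "a \<noteq> 0" and p: "p \<ge> 0" and m: "m \<ge> 2"
    and ode: "m^2*a/R - b - R*c = m*p*(m*(b*b + a*c)/R - m*a*b/R^2)*a"
    and phi: "R^2*b^2 - 2*m^2*R*a*b + m^2*a^2 = 0"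
  shows "b^2*(1-m^2) + c*(R*b - m^2*a) < 0"
proof -
  define w where "w = R*b/a"
  define k where "k = m^2*p*a^2/R^2"
  have bw: "b = w*a/R" using R a unfolding w_def by simp
  have k0: "k \<ge> 0" unfolding k_def using p by simp
  have "a^2 * (w^2 - 2*m^2*w + m^2) = 0"
    using phi R unfolding bw by (simp add: field_simps power2_eq_square)
  hence q: "w^2 - 2*m^2*w + m^2 = 0" using a by simp
  have wpos: "w > 0"
  proof (rule ccontr)
    assume "\<not> w > 0"
    hence "2*m^2*w \<le> 0" by (simp add: mult_nonneg_nonpos)
    moreover have "w^2 \<ge> 0" by simp
    moreover have "m^2 > 0" using m by simp
    ultimately show False using q by linarith
  qed
  have "c*(R^2*(1+k)) - a*(m^2 - w - k*(w^2-w))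
     = - R * ((m^2*a/R - b - R*c) - m*p*(m*(b*b + a*c)/R - m*a*b/R^2)*a)"
    using R unfolding bw k_def by (simp add: field_simps power2_eq_square)
  hence cq: "c*(R^2*(1+k)) = a*(m^2 - w - k*(w^2-w))" using ode by simp
  have "(b^2*(1-m^2) + c*(R*b - m^2*a)) * (R^2*(1+k))
      = w^2*a^2*(1-m^2)*(1+k) + (c*(R^2*(1+k)))*(a*(w - m^2))"
    using R unfolding bw by (simp add: field_simps power2_eq_square)
  also have "\<dots> = a^2*(w^2*(1-m^2)*(1+k) + (m^2 - w - k*(w^2-w))*(w - m^2))"
    unfolding cq by (simp add: algebra_simps power2_eq_square)
  also have "w^2*(1-m^2)*(1+k) + (m^2 - w - k*(w^2-w))*(w - m^2)
      = (m^2 + k*w)*(2*w*(1-m^2) - (w^2 - 2*m^2*w + m^2))"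
    by (simp add: algebra_simps power2_eq_square)
  also have "\<dots> = (m^2 + k*w)*(2*w*(1-m^2))" using q by simp
  finally have eq: "(b^2*(1-m^2) + c*(R*b - m^2*a)) * (R^2*(1+k)) = a^2*((m^2 + k*w)*(2*w*(1-m^2)))" .
  have "m^2 + k*w > 0" using k0 wpos m by (simp add: add_pos_nonneg)
  moreover have "2*w*(1-m^2) < 0"
  proof -
    have "m^2 \<ge> 2^2" using m by (intro power_mono) auto
    hence "1 - m^2 < 0" by simp
    thus ?thesis using wpos by (intro mult_pos_neg) auto
  qed
  ultimately have "a^2*((m^2 + k*w)*(2*w*(1-m^2))) < 0"
    using a by (simp add: mult_pos_neg)
  hence "(b^2*(1-m^2) + c*(R*b - m^2*a)) * (R^2*(1+k)) < 0" using eq by simp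
  moreover have "R^2*(1+k) > 0" using R k0 by simp
  ultimately show ?thesis using k0 by (auto simp: mult_less_0_iff)
qed




lemma setup_rho:
  assumes "rho_admissible \<gamma> s0 \<kappa> \<rho>"
  obtains G where "\<rho> = G 0" "\<And>n x. (G n has_real_derivative G (Suc n) x) (at x)"
    "deriv \<rho> = G 1" "deriv (deriv \<rho>) = G 2" "\<And>x. G 2 x \<ge> 0"
proof -
  from assms have sm: "smooth_on UNIV \<rho>" and cv: "convex_on UNIV \<rho>"
    unfolding rho_admissible_def by auto
  then obtain G where G0: "\<forall>x\<in>UNIV. G 0 x = \<rho> x"
    and GD: "\<forall>n. \<forall>x\<in>UNIV. (G n has_real_derivative G (Suc n) x) (at x within UNIV)"
    unfolding smooth_on_def by blast
  have rG: "\<rho> = G 0" using G0 by auto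
  have Gd: "\<And>n x. (G n has_real_derivative G (Suc n) x) (at x)" using GD by blast
  have d1: "deriv \<rho> = G 1"
    by (rule ext) (use Gd[of 0] rG in \<open>auto intro: DERIV_imp_deriv\<close>)
  have d2: "deriv (deriv \<rho>) = G 2"
    by (rule ext) (use Gd[of 1] d1 in \<open>auto intro: DERIV_imp_deriv simp: numeral_2_eq_2\<close>)
  have "\<And>x. G 2 x \<ge> 0"
    using convex_f2_nonneg[of \<rho> "G 1" "G 2"] cv Gd[of 0] Gd[of 1] rG
    by (simp add: numeral_2_eq_2)
  thus ?thesis using that rG Gd d1 d2 by blast
qed

lemma setup_r:
  assumes "strong_solution M \<rho> r"
  obtains F where
    "\<And>n x. 0 < x \<Longrightarrow> x < 1 \<Longrightarrow> (F n has_real_derivative F (Suc n) x) (at x)"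
    "\<And>x. 0 < x \<Longrightarrow> x < 1 \<Longrightarrow> r x = F 0 x"
    "\<And>x. 0 < x \<Longrightarrow> x < 1 \<Longrightarrow> (r has_real_derivative F 1 x) (at x)"
    "\<And>x. 0 < x \<Longrightarrow> x < 1 \<Longrightarrow> deriv r x = F 1 x"
    "\<And>x. 0 < x \<Longrightarrow> x < 1 \<Longrightarrow> deriv (deriv r) x = F 2 x"
proof -
  from assms have "smooth_on {0<..1} r" unfolding strong_solution_def by auto
  then obtain F where F0: "\<forall>x\<in>{0<..1}. F 0 x = r x"
    and FD: "\<forall>n. \<forall>x\<in>{0<..1}. (F n has_real_derivative F (Suc n) x) (at x within {0<..1})"
    unfolding smooth_on_def by blast
  have Fd: "(F n has_real_derivative F (Suc n) x) (at x)" if "0 < x" "x < 1" for n x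
  proof -
    have e: "at x within {0<..1} = at x"
      by (rule at_within_open_subset[where S="{0<..<1}"]) (use that in auto)
    have "x \<in> {0<..1}" using that by auto
    hence "(F n has_real_derivative F (Suc n) x) (at x within {0<..1})" using FD by blast
    thus ?thesis by (simp only: e)
  qed
  have rF: "r x = F 0 x" if "0 < x" "x < 1" for x using F0 that by auto
  have Fd0: "(F 0 has_real_derivative F 1 x) (at x)" if "0 < x" "x < 1" for x
    using Fd[OF that, of 0] unfolding One_nat_def .
  have Fd1: "(F 1 has_real_derivative F 2 x) (at x)" if "0 < x" "x < 1" for x
    using Fd[OF that, of 1] unfolding numeral_2_eq_2 One_nat_def .
  have rd: "(r has_real_derivative F 1 x) (at x)" if "0 < x" "x < 1" for x
    by (rule has_field_derivative_transform_within_open[OF Fd0[OF that] open_greaterThanLessThan[of 0 1]])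
       (use that rF in auto)
  have dr: "deriv r x = F 1 x" if "0 < x" "x < 1" for x
    using rd[OF that] by (rule DERIV_imp_deriv)
  have drd: "(deriv r has_real_derivative F 2 x) (at x)" if "0 < x" "x < 1" for x
    by (rule has_field_derivative_transform_within_open[OF Fd1[OF that] open_greaterThanLessThan[of 0 1]])
       (use that dr in auto)
  have ddr: "deriv (deriv r) x = F 2 x" if "0 < x" "x < 1" for x
    using drd[OF that] by (rule DERIV_imp_deriv)
  show ?thesis using that Fd rF rd dr ddr by blast
qed




lemma core_derivs:
  fixes a b c g0 g1 g2 :: "real \<Rightarrow> real" and r \<rho> :: "real \<Rightarrow> real" and M :: nat and x :: real
  assumes x: "0 < x" "x < 1"
  and Fd0: "\<And>x. 0 < x \<Longrightarrow> x < 1 \<Longrightarrow> (a has_real_derivative b x) (at x)"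
  and Fd1: "\<And>x. 0 < x \<Longrightarrow> x < 1 \<Longrightarrow> (b has_real_derivative c x) (at x)"
  and rF: "\<And>x. 0 < x \<Longrightarrow> x < 1 \<Longrightarrow> r x = a x"
  and dr: "\<And>x. 0 < x \<Longrightarrow> x < 1 \<Longrightarrow> deriv r x = b x"
  and ddr: "\<And>x. 0 < x \<Longrightarrow> x < 1 \<Longrightarrow> deriv (deriv r) x = c x"
  and rG: "\<rho> = g0"
  and Gd0: "\<And>x. (g0 has_real_derivative g1 x) (at x)"
  and Gd1: "\<And>x. (g1 has_real_derivative g2 x) (at x)"
  and dG1: "deriv \<rho> = g1" and dG2: "deriv (deriv \<rho>) = g2"
  and ode: "\<forall>R\<in>{0<..<1}. Lop M r R
        = real M * deriv (deriv \<rho>) (dfun M r R) * deriv (dfun M r) R * r R"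
  defines "D \<equiv> \<lambda>y. real M * a y * b y / y"
  and "Dp \<equiv> \<lambda>y. real M * (b y * b y + a y * c y) / y - real M * a y * b y / y^2"
  and "\<Phi> \<equiv> \<lambda>y. y^2 * (b y)^2 - 2*(real M)^2*y*a y*b y + (real M)^2*(a y)^2"
  and "\<Phi>p \<equiv> \<lambda>y. 2*y*((b y)^2*(1-(real M)^2) + c y*(y*b y - (real M)^2*a y))"
  shows "(\<Phi> has_real_derivative \<Phi>p x) (at x)"
    and "(real M)^2*a x/x - b x - x*c x = real M * g2 (D x) * Dp x * a x"
    and "(zfun M \<rho> r has_real_derivative - \<Phi> x / x^3) (at x)"
    and "(dfun M r has_real_derivative Dp x) (at x)"
proof -
  have hD: "(D has_real_derivative Dp x) (at x)" if "0 < x" "x < 1" for x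
    unfolding D_def Dp_def using that
    by (auto intro!: derivative_eq_intros Fd0 Fd1 simp: field_simps power2_eq_square)
  have dfD: "dfun M r y = D y" if "y \<in> {0<..<1}" for y
    using that rF dr unfolding dfun_def D_def by auto
  have hdf: "(dfun M r has_real_derivative Dp x) (at x)"
    by (rule has_field_derivative_transform_within_open[OF hD[OF x] open_greaterThanLessThan[of 0 1]])
       (use x dfD in auto)
  show "(dfun M r has_real_derivative Dp x) (at x)" by (rule hdf)
  show "(\<Phi> has_real_derivative \<Phi>p x) (at x)"
    unfolding \<Phi>_def \<Phi>p_def using x
    by (auto intro!: derivative_eq_intros Fd0 Fd1 simp: field_simps power2_eq_square)
  have ode': "(real M)^2*a x/x - b x - x*c x = real M * g2 (D x) * Dp x * a x"
    using ode x DERIV_imp_deriv[OF hdf] dfD[of x]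
    unfolding Lop_def dG2 by (simp add: rF dr ddr)
  thus "(real M)^2*a x/x - b x - x*c x = real M * g2 (D x) * Dp x * a x" .
  define Zf where "Zf y = (b y)^2/2 + (real M)^2*(a y)^2/(2*y^2) + (D y * g1 (D y) - g0 (D y))" for y
  define Zp where "Zp = b x * c x + (real M)^2*(a x*b x/x^2 - (a x)^2/x^3) + D x * g2 (D x) * Dp x"
  have c0: "((\<lambda>y. g0 (D y)) has_real_derivative g1 (D x) * Dp x) (at x)"
    by (rule DERIV_chain2[OF Gd0 hD[OF x]])
  have c1: "((\<lambda>y. g1 (D y)) has_real_derivative g2 (D x) * Dp x) (at x)"
    by (rule DERIV_chain2[OF Gd1 hD[OF x]])
  have hZ: "(Zf has_real_derivative Zp) (at x)"
    unfolding Zf_def Zp_def using x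
    by (auto intro!: derivative_eq_intros Fd0 Fd1 hD c0 c1 simp: field_simps power2_eq_square power3_eq_cube)
  have "D x * g2 (D x) * Dp x = b x / x * (real M * g2 (D x) * Dp x * a x)"
    unfolding D_def by simp
  also have "\<dots> = b x / x * ((real M)^2*a x/x - b x - x*c x)" by (simp only: ode')
  finally have E: "D x * g2 (D x) * Dp x = b x / x * ((real M)^2*a x/x - b x - x*c x)" .
  have "Zp = - \<Phi> x / x^3"
    unfolding Zp_def E \<Phi>_def using x by (simp add: field_simps power2_eq_square power3_eq_cube)
  hence hZ': "(Zf has_real_derivative - \<Phi> x / x^3) (at x)" using hZ by simp
  have zZ: "zfun M \<rho> r y = Zf y" if "y \<in> {0<..<1}" for y
    using that dfD[OF that] unfolding zfun_def ffun_def Zf_def dG1 rG by (simp add: rF dr dG1[unfolded rG])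
  show "(zfun M \<rho> r has_real_derivative - \<Phi> x / x^3) (at x)"
    by (rule has_field_derivative_transform_within_open[OF hZ' open_greaterThanLessThan[of 0 1]])
       (use x zZ in auto)
qed




lemma no_double_zero:
  fixes a b c h r :: "real \<Rightarrow> real" and m x0 :: real
  assumes Fd0: "\<And>x. 0 < x \<Longrightarrow> x < 1 \<Longrightarrow> (a has_real_derivative b x) (at x)"
    and Fd1: "\<And>x. 0 < x \<Longrightarrow> x < 1 \<Longrightarrow> (b has_real_derivative c x) (at x)"
    and hc: "\<And>x. 0 < x \<Longrightarrow> x < 1 \<Longrightarrow> isCont h x"
    and ode: "\<And>x. 0 < x \<Longrightarrow> x < 1 \<Longrightarrow> m^2*a x/x - b x - x*c x = h x * a x"
    and rc: "continuous_on {0..1} r"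
    and rF: "\<And>x. 0 < x \<Longrightarrow> x < 1 \<Longrightarrow> r x = a x"
    and r1: "r 1 = 1"
    and x0: "0 < x0" "x0 < 1" "a x0 = 0" "b x0 = 0"
  shows False
proof -
  have zero: "a y = 0" if y: "x0 < y" "y < 1" for y
  proof -
    define k where "k t = m^2/t^2 - h t / t" for t
    have kc: "continuous_on {x0..y} k"
    proof (rule continuous_at_imp_continuous_on, intro ballI)
      fix t assume "t \<in> {x0..y}"
      hence t: "0 < t" "t < 1" using x0 y by auto
      show "isCont k t" unfolding k_def using t hc[OF t] by (intro continuous_intros) auto
    qed
    have "continuous_on {x0..y} (\<lambda>t. \<bar>k t\<bar>)" using kc by (rule continuous_on_rabs)
    then obtain t0 where "t0 \<in> {x0..y}" and t0: "\<forall>s\<in>{x0..y}. \<bar>k s\<bar> \<le> \<bar>k t0\<bar>"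
      using continuous_attains_sup[of "{x0..y}" "\<lambda>t. \<bar>k t\<bar>"] y by auto
    define K where "K = \<bar>k t0\<bar>"
    have K0: "K \<ge> 0" unfolding K_def by simp
    define E where "E t = (a t)^2 + (b t)^2" for t
    define E' where "E' t = 2 * a t * b t + 2 * b t * c t" for t
    have "E y = 0"
    proof (rule gronwall0[of x0 y E E' "1 + K"])
      show "x0 \<le> y" using y by simp
      fix t assume "t \<in> {x0..y}"
      hence t: "0 < t" "t < 1" "x0 \<le> t" "t \<le> y" using x0 y by auto
      show "(E has_real_derivative E' t) (at t)"
        unfolding E_def E'_def using t
        by (auto intro!: derivative_eq_intros Fd0 Fd1 simp: power2_eq_square algebra_simps)
      have ct: "c t = k t * a t - b t / t"
        using ode[OF t(1,2)] t unfolding k_def by (simp add: field_simps power2_eq_square)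
      have "E' t = 2 * a t * b t * (1 + k t) - 2 * (b t)^2 / t"
        unfolding E'_def ct using t by (simp add: field_simps power2_eq_square)
      also have "\<dots> \<le> 2 * a t * b t * (1 + k t)"
        using t by simp
      also have "\<dots> \<le> \<bar>2 * a t * b t\<bar> * \<bar>1 + k t\<bar>"
        by (metis abs_ge_self abs_mult)
      also have "\<dots> \<le> E t * (1 + K)"
      proof (rule mult_mono)
        have "0 \<le> (a t - b t)^2" "0 \<le> (a t + b t)^2" by simp_all
        thus "\<bar>2 * a t * b t\<bar> \<le> E t" unfolding E_def
          by (simp add: power2_eq_square algebra_simps abs_le_iff)
        have "\<bar>k t\<bar> \<le> K" using t0 t unfolding K_def by auto
        thus "\<bar>1 + k t\<bar> \<le> 1 + K" by simp
        show "0 \<le> E t" unfolding E_def by simp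
      qed simp
      finally show "E' t \<le> (1 + K) * E t" by (simp add: mult.commute)
    next
      show "E x0 = 0" unfolding E_def using x0 by simp
      show "0 \<le> E y" unfolding E_def by simp
    qed
    thus ?thesis unfolding E_def by (simp add: add_nonneg_eq_0_iff)
  qed
  define S where "S = {t \<in> {x0..1}. r t = 0}"
  have "closed S" unfolding S_def
    by (rule continuous_closed_preimage_constant) (use rc x0 in \<open>auto intro: continuous_on_subset\<close>)
  moreover have "{x0<..<1} \<subseteq> S" unfolding S_def using zero rF x0 by auto
  ultimately have "closure {x0<..<1} \<subseteq> S" by (rule closure_minimal[rotated])
  hence "1 \<in> S" using x0 by auto
  thus False unfolding S_def using r1 by simp
qed





theorem lemma2p5:
  fixes \<gamma> s0 \<kappa> :: real and \<rho> r :: "real \<Rightarrow> real" and M :: nat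
  assumes "rho_admissible \<gamma> s0 \<kappa> \<rho>"
    and "M \<ge> 2"
    and "strong_solution M \<rho> r"
  shows "\<exists>\<delta>>0. \<delta> \<le> 1 \<and>
    (mono_on {0<..<\<delta>} (zfun M \<rho> r) \<or>
     monotone_on {0<..<\<delta>} (\<le>) (\<ge>) (zfun M \<rho> r)) \<and>
    ((\<forall>R\<in>{0<..<\<delta>}. r R > 0) \<longrightarrow>
       (\<forall>R\<in>{0<..<\<delta>}. deriv (zfun M \<rho> r) R \<ge> 0 \<and>
           0 < (real M)\<^sup>2 - real M * sqrt ((real M)\<^sup>2 - 1) \<and>
           (real M)\<^sup>2 - real M * sqrt ((real M)\<^sup>2 - 1) \<le> R * deriv r R / r R \<and>
           R * deriv r R / r R \<le> (real M)\<^sup>2 + real M * sqrt ((real M)\<^sup>2 - 1))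
     \<or> (\<forall>R\<in>{0<..<\<delta>}. deriv (zfun M \<rho> r) R \<le> 0 \<and> deriv (\<lambda>t. r t / t) R > 0)
     \<or> (\<forall>R\<in>{0<..<\<delta>}. deriv (zfun M \<rho> r) R \<le> 0 \<and> deriv (\<lambda>t. r t / t) R < 0))"
proof -
  obtain G where rG: "\<rho> = G 0" and Gd: "\<And>n x. (G n has_real_derivative G (Suc n) x) (at x)"
    and dG1: "deriv \<rho> = G 1" and dG2: "deriv (deriv \<rho>) = G 2" and Gpos: "\<And>x. G 2 x \<ge> 0"
    using setup_rho[OF assms(1)] by blast
  obtain F where Fd: "\<And>n x. 0 < x \<Longrightarrow> x < 1 \<Longrightarrow> (F n has_real_derivative F (Suc n) x) (at x)"
    and rF: "\<And>x. 0 < x \<Longrightarrow> x < 1 \<Longrightarrow> r x = F 0 x"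
    and rd: "\<And>x. 0 < x \<Longrightarrow> x < 1 \<Longrightarrow> (r has_real_derivative F 1 x) (at x)"
    and dr: "\<And>x. 0 < x \<Longrightarrow> x < 1 \<Longrightarrow> deriv r x = F 1 x"
    and ddr: "\<And>x. 0 < x \<Longrightarrow> x < 1 \<Longrightarrow> deriv (deriv r) x = F 2 x"
    using setup_r[OF assms(3)] by blast
  from assms(3) have ode: "\<forall>R\<in>{0<..<1}. Lop M r R
        = real M * deriv (deriv \<rho>) (dfun M r R) * deriv (dfun M r) R * r R"
    and rc: "continuous_on {0..1} r" and r1: "r 1 = 1"
    unfolding strong_solution_def by auto
  define a where "a = F 0"
  define b where "b = F 1"
  define c where "c = F 2"
  define g0 where "g0 = G 0"
  define g1 where "g1 = G 1"
  define g2 where "g2 = G 2"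
  have Fd0: "(a has_real_derivative b x) (at x)" if "0 < x" "x < 1" for x
    using Fd[OF that, of 0] unfolding a_def b_def One_nat_def .
  have Fd1: "(b has_real_derivative c x) (at x)" if "0 < x" "x < 1" for x
    using Fd[OF that, of 1] unfolding b_def c_def numeral_2_eq_2 One_nat_def .
  have cc: "isCont c x" if "0 < x" "x < 1" for x
    using DERIV_isCont[OF Fd[OF that, of 2]] unfolding c_def .
  have Gd0: "(g0 has_real_derivative g1 x) (at x)" for x
    using Gd[of 0] unfolding g0_def g1_def One_nat_def .
  have Gd1: "(g1 has_real_derivative g2 x) (at x)" for x
    using Gd[of 1] unfolding g2_def g1_def numeral_2_eq_2 One_nat_def .
  have g2c: "isCont g2 x" for x
    using DERIV_isCont[OF Gd[of 2]] unfolding g2_def .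
  have rF': "r x = a x" if "0 < x" "x < 1" for x using rF[OF that] a_def by simp
  have rd': "(r has_real_derivative b x) (at x)" if "0 < x" "x < 1" for x using rd[OF that] b_def by simp
  have dr': "deriv r x = b x" if "0 < x" "x < 1" for x using dr[OF that] b_def by simp
  have ddr': "deriv (deriv r) x = c x" if "0 < x" "x < 1" for x using ddr[OF that] c_def by simp
  have rG': "\<rho> = g0" using rG g0_def by simp
  have dG1': "deriv \<rho> = g1" using dG1 g1_def by simp
  have dG2': "deriv (deriv \<rho>) = g2" using dG2 g2_def by simp
  have g2pos: "g2 x \<ge> 0" for x using Gpos g2_def by simp
  define m where "m = real M"
  have m2: "m \<ge> 2" using assms(2) unfolding m_def by simp
  define D where "D = (\<lambda>y. m * a y * b y / y)"
  define Dp where "Dp = (\<lambda>y. m * (b y * b y + a y * c y) / y - m * a y * b y / y^2)"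
  define \<Phi> where "\<Phi> = (\<lambda>y. y^2 * (b y)^2 - 2*m^2*y*a y*b y + m^2*(a y)^2)"
  define \<Phi>p where "\<Phi>p = (\<lambda>y. 2*y*((b y)^2*(1-m^2) + c y*(y*b y - m^2*a y)))"
  note cd = core_derivs[OF _ _ Fd0 Fd1 rF' dr' ddr' rG' Gd0 Gd1 dG1' dG2' ode]
  have h\<Phi>: "(\<Phi> has_real_derivative \<Phi>p x) (at x)" if "0 < x" "x < 1" for x
    using cd(1)[OF that] unfolding \<Phi>_def \<Phi>p_def m_def by simp
  have ode': "m^2*a x/x - b x - x*c x = m * g2 (D x) * Dp x * a x" if "0 < x" "x < 1" for x
    using cd(2)[OF that] unfolding D_def Dp_def m_def by simp
  have hz: "(zfun M \<rho> r has_real_derivative - \<Phi> x / x^3) (at x)" if "0 < x" "x < 1" for x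
    using cd(3)[OF that] unfolding \<Phi>_def m_def by simp
  have dz: "deriv (zfun M \<rho> r) x = - \<Phi> x / x^3" if "0 < x" "x < 1" for x
    using hz[OF that] by (rule DERIV_imp_deriv)
  have UL: "\<not> (a x = 0 \<and> b x = 0)" if "0 < x" "x < 1" for x
  proof
    assume "a x = 0 \<and> b x = 0"
    show False
    proof (rule no_double_zero[of a b c "\<lambda>y. m * g2 (D y) * Dp y" m r x])
      show "(a has_real_derivative b y) (at y)" if "0 < y" "y < 1" for y using Fd0 that .
      show "(b has_real_derivative c y) (at y)" if "0 < y" "y < 1" for y using Fd1 that .
      show "isCont (\<lambda>y. m * g2 (D y) * Dp y) y" if y: "0 < y" "y < 1" for y
      proof -
        have ca: "isCont a y" using DERIV_isCont[OF Fd0[OF y]] .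
        have cb: "isCont b y" using DERIV_isCont[OF Fd1[OF y]] .
        have cD: "isCont D y" unfolding D_def using y ca cb by (intro continuous_intros) auto
        have cDp: "isCont Dp y" unfolding Dp_def using y ca cb cc[OF y] by (intro continuous_intros) auto
        have "isCont (\<lambda>y. g2 (D y)) y" using isCont_o2[OF cD g2c] .
        thus ?thesis using cDp by (intro continuous_intros)
      qed
      show "m^2*a y/y - b y - y*c y = m * g2 (D y) * Dp y * a y" if "0 < y" "y < 1" for y
        using ode'[OF that] .
      show "continuous_on {0..1} r" by (rule rc)
      show "r y = a y" if "0 < y" "y < 1" for y using rF' that .
      show "r 1 = 1" by (rule r1)
    qed (use that \<open>a x = 0 \<and> b x = 0\<close> in auto)
  qed
  have KL: "\<Phi> y \<le> 0" if "0 < x" "x \<le> y" "y < 1" "\<Phi> x \<le> 0" for x y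
  proof (rule crossing[of x y \<Phi> \<Phi>p])
    show "x \<le> y" using that by simp
    show "\<Phi> x \<le> 0" using that by simp
    fix t assume "t \<in> {x..y}"
    hence t: "0 < t" "t < 1" using that by auto
    show "(\<Phi> has_real_derivative \<Phi>p t) (at t)" using h\<Phi>[OF t] .
    assume \<Phi>0: "\<Phi> t = 0"
    show "\<Phi>p t < 0"
    proof (cases "a t = 0")
      case True
      hence "t^2 * (b t)^2 = 0" using \<Phi>0 unfolding \<Phi>_def by simp
      hence "b t = 0" using t by simp
      thus ?thesis using UL[OF t] True by simp
    next
      case False
      have "(b t)^2*(1-m^2) + c t*(t*b t - m^2*a t) < 0"
      proof (rule alg_neg[OF t(1) False g2pos m2])
        show "m^2*a t/t - b t - t*c t = m*g2 (D t)*(m*(b t*b t + a t*c t)/t - m*a t*b t/t^2)*a t"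
          using ode'[OF t] unfolding Dp_def by simp
        show "t^2*(b t)^2 - 2*m^2*t*a t*b t + m^2*(a t)^2 = 0" using \<Phi>0 unfolding \<Phi>_def by simp
      qed
      thus ?thesis unfolding \<Phi>p_def using t by (simp add: mult_pos_neg)
    qed
  qed
  have sqb: "0 < m^2 - m * sqrt (m^2 - 1)"
  proof -
    have "sqrt (m^2 - 1) < sqrt (m^2)" by (rule real_sqrt_less_mono) simp
    hence "sqrt (m^2 - 1) < m" using m2 by simp
    hence "m * sqrt (m^2 - 1) < m * m" using m2 by (intro mult_strict_left_mono) auto
    thus ?thesis by (simp add: power2_eq_square)
  qed
  show ?thesis
  proof (cases "\<exists>\<epsilon>>0. \<epsilon> \<le> 1 \<and> (\<forall>x\<in>{0<..<\<epsilon>}. \<Phi> x > 0)")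
    case True
    then obtain \<epsilon> where e: "\<epsilon> > 0" "\<epsilon> \<le> 1" and pos: "\<forall>x\<in>{0<..<\<epsilon>}. \<Phi> x > 0" by blast
    have anti: "monotone_on {0<..<\<epsilon>} (\<le>) (\<ge>) (zfun M \<rho> r)"
    proof (rule monotone_onI)
      fix x y assume xy: "x \<in> {0<..<\<epsilon>}" "y \<in> {0<..<\<epsilon>}" "x \<le> y"
      show "zfun M \<rho> r y \<le> zfun M \<rho> r x"
      proof (rule deriv_nonpos_imp_antimono[of x y _ "\<lambda>t. - \<Phi> t / t^3"])
        fix t assume "t \<in> {x..y}"
        hence t: "0 < t" "t < 1" "t \<in> {0<..<\<epsilon>}" using xy e by auto
        show "(zfun M \<rho> r has_real_derivative - \<Phi> t / t^3) (at t)" using hz[OF t(1,2)] .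
        have "\<Phi> t > 0" using pos t(3) by blast
        hence "0 \<le> \<Phi> t / t^3" using t by (intro divide_nonneg_pos) auto
        thus "- \<Phi> t / t^3 \<le> 0" by simp
      qed (use xy in auto)
    qed
    have part2: "(\<forall>R\<in>{0<..<\<epsilon>}. deriv (zfun M \<rho> r) R \<le> 0 \<and> deriv (\<lambda>t. r t / t) R > 0)
      \<or> (\<forall>R\<in>{0<..<\<epsilon>}. deriv (zfun M \<rho> r) R \<le> 0 \<and> deriv (\<lambda>t. r t / t) R < 0)"
      if rpos: "\<forall>R\<in>{0<..<\<epsilon>}. r R > 0"
    proof -
      define q where "q t = t * b t - a t" for t
      have qne: "q R \<noteq> 0" if R: "R \<in> {0<..<\<epsilon>}" for R
      proof
        assume "q R = 0"
        hence bR: "R * b R = a R" unfolding q_def by simp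
        have R1: "0 < R" "R < 1" using R e by auto
        have "r R > 0" using rpos R by blast
        hence aR: "a R > 0" using rF'[OF R1] by simp
        have "\<Phi> R = (1 - m^2) * (a R)^2"
          unfolding \<Phi>_def using bR by (simp add: power2_eq_square algebra_simps)
          (metis bR mult.assoc mult.commute)
        also have "\<dots> < 0" using aR m2 by (intro mult_neg_pos) (auto simp: power2_eq_square, smt (verit) mult_le_cancel_right1)
        finally show False using pos R by force
      qed
      have dq: "deriv (\<lambda>t. r t / t) R = q R / R^2" if R: "R \<in> {0<..<\<epsilon>}" for R
      proof -
        have R1: "0 < R" "R < 1" using R e by auto
        have "((\<lambda>t. r t / t) has_real_derivative q R / R^2) (at R)"
          using R1 by (auto intro!: derivative_eq_intros rd'[OF R1] simp: q_def rF'[OF R1] power2_eq_square field_simps)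
        thus ?thesis by (rule DERIV_imp_deriv)
      qed
      have qc: "continuous_on {s..t} q" if "s \<in> {0<..<\<epsilon>}" "t \<in> {0<..<\<epsilon>}" for s t
      proof (rule continuous_at_imp_continuous_on, intro ballI)
        fix y assume "y \<in> {s..t}"
        hence y: "0 < y" "y < 1" using that e by auto
        show "isCont q y" unfolding q_def
          using DERIV_isCont[OF Fd0[OF y]] DERIV_isCont[OF Fd1[OF y]] by (intro continuous_intros) auto
      qed
      have sgn: "(\<forall>R\<in>{0<..<\<epsilon>}. q R > 0) \<or> (\<forall>R\<in>{0<..<\<epsilon>}. q R < 0)"
      proof (rule ccontr)
        assume "\<not> ?thesis"
        then obtain s t where s: "s \<in> {0<..<\<epsilon>}" "q s \<le> 0" and t: "t \<in> {0<..<\<epsilon>}" "q t \<ge> 0"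
          by (auto simp: not_less)
        have "\<exists>x\<in>{0<..<\<epsilon>}. q x = 0"
        proof (cases "s \<le> t")
          case True
          obtain x where "s \<le> x" "x \<le> t" "q x = 0" using IVT'[of q s 0 t] s t True qc[OF s(1) t(1)] by auto
          thus ?thesis using s t by (intro bexI[of _ x]) auto
        next
          case False
          obtain x where "t \<le> x" "x \<le> s" "q x = 0" using IVT2'[of q s 0 t] s t False qc[OF t(1) s(1)] by auto
          thus ?thesis using s t by (intro bexI[of _ x]) auto
        qed
        thus False using qne by blast
      qed
      have zle: "deriv (zfun M \<rho> r) R \<le> 0" if R: "R \<in> {0<..<\<epsilon>}" for R
      proof -
        have R1: "0 < R" "R < 1" using R e by auto
        have "\<Phi> R > 0" using pos R by blast
        hence "0 \<le> \<Phi> R / R^3" using R1 by (intro divide_nonneg_pos) auto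
        thus ?thesis using dz[OF R1] by simp
      qed
      from sgn show ?thesis
      proof
        assume "\<forall>R\<in>{0<..<\<epsilon>}. q R > 0"
        hence "\<forall>R\<in>{0<..<\<epsilon>}. deriv (zfun M \<rho> r) R \<le> 0 \<and> deriv (\<lambda>t. r t / t) R > 0"
          using zle dq by simp
        thus ?thesis by blast
      next
        assume "\<forall>R\<in>{0<..<\<epsilon>}. q R < 0"
        hence "\<forall>R\<in>{0<..<\<epsilon>}. deriv (zfun M \<rho> r) R \<le> 0 \<and> deriv (\<lambda>t. r t / t) R < 0"
          using zle dq by (simp add: divide_neg_pos)
        thus ?thesis by blast
      qed
    qed
    show ?thesis
      by (rule exI[of _ \<epsilon>]) (use e anti part2 in blast)
  next
    case False
    have all: "\<Phi> y \<le> 0" if y: "0 < y" "y < 1" for y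
    proof -
      have "\<not> (\<forall>x\<in>{0<..<y}. \<Phi> x > 0)"
      proof
        assume "\<forall>x\<in>{0<..<y}. \<Phi> x > 0"
        hence "\<exists>\<epsilon>>0. \<epsilon> \<le> 1 \<and> (\<forall>x\<in>{0<..<\<epsilon>}. \<Phi> x > 0)" using y by (intro exI[of _ y]) auto
        thus False using False by blast
      qed
      then obtain x where "x \<in> {0<..<y}" "\<not> \<Phi> x > 0" by blast
      thus ?thesis using KL[of x y] y by auto
    qed
    have mono: "mono_on {0<..<1} (zfun M \<rho> r)"
    proof (rule monotone_onI)
      fix x y :: real assume xy: "x \<in> {0<..<1}" "y \<in> {0<..<1}" "x \<le> y"
      show "zfun M \<rho> r x \<le> zfun M \<rho> r y"
      proof (rule deriv_nonneg_imp_mono[of x y _ "\<lambda>t. - \<Phi> t / t^3"])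
        fix t assume "t \<in> {x..y}"
        hence t: "0 < t" "t < 1" using xy by auto
        show "(zfun M \<rho> r has_real_derivative - \<Phi> t / t^3) (at t)" using hz[OF t] .
        have "\<Phi> t / t^3 \<le> 0" using all[OF t] t by (intro divide_nonpos_pos) auto
        thus "- \<Phi> t / t^3 \<ge> 0" by simp
      qed (use xy in auto)
    qed
    have part2: "\<forall>R\<in>{0<..<1}. deriv (zfun M \<rho> r) R \<ge> 0 \<and>
           0 < m^2 - m * sqrt (m^2 - 1) \<and>
           m^2 - m * sqrt (m^2 - 1) \<le> R * deriv r R / r R \<and>
           R * deriv r R / r R \<le> m^2 + m * sqrt (m^2 - 1)"
      if rpos: "\<forall>R\<in>{0<..<1}. r R > 0"
    proof
      fix R :: real assume R: "R \<in> {0<..<1}"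
      hence R1: "0 < R" "R < 1" by auto
      have "r R > 0" using rpos R by blast
        hence aR: "a R > 0" using rF'[OF R1] by simp
      define w where "w = R * b R / a R"
      have wdef: "R * deriv r R / r R = w" unfolding w_def using dr'[OF R1] rF'[OF R1] by simp
      have bR: "R * b R = w * a R" unfolding w_def using aR by simp
      have "\<Phi> R = (a R)^2 * (w^2 - 2*m^2*w + m^2)"
      proof -
        have "\<Phi> R = (R * b R)^2 - 2*m^2*(R*b R)*a R + m^2*(a R)^2"
          unfolding \<Phi>_def by (simp add: power2_eq_square algebra_simps)
        also have "\<dots> = (a R)^2 * (w^2 - 2*m^2*w + m^2)"
          unfolding bR by (simp add: power2_eq_square algebra_simps)
        finally show ?thesis .
      qed
      hence "(a R)^2 * (w^2 - 2*m^2*w + m^2) \<le> 0" using all[OF R1] by simp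
      hence qw: "w^2 - 2*m^2*w + m^2 \<le> 0" using aR by (simp add: mult_le_0_iff)
      have sq: "(m * sqrt (m^2 - 1))^2 = m^2 * (m^2 - 1)"
        using m2 by (simp add: power_mult_distrib)
      have "\<bar>w - m^2\<bar>^2 \<le> (m * sqrt (m^2 - 1))^2"
        unfolding sq using qw by (simp add: power2_eq_square algebra_simps)
      hence "\<bar>w - m^2\<bar> \<le> m * sqrt (m^2 - 1)"
        by (rule power2_le_imp_le) (use m2 in simp)
      hence "m^2 - m * sqrt (m^2 - 1) \<le> w \<and> w \<le> m^2 + m * sqrt (m^2 - 1)"
        by (simp add: abs_le_iff)
      moreover have "\<Phi> R / R^3 \<le> 0" using all[OF R1] R1 by (intro divide_nonpos_pos) auto
      hence "deriv (zfun M \<rho> r) R \<ge> 0" using dz[OF R1] by simp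
      ultimately show "deriv (zfun M \<rho> r) R \<ge> 0 \<and>
           0 < m^2 - m * sqrt (m^2 - 1) \<and>
           m^2 - m * sqrt (m^2 - 1) \<le> R * deriv r R / r R \<and>
           R * deriv r R / r R \<le> m^2 + m * sqrt (m^2 - 1)" using sqb wdef by simp
    qed
    show ?thesis
      by (rule exI[of _ 1]) (use mono part2[unfolded m_def] in auto)
  qed
qed


end
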